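(* In the setting below, $C=S/\operatorname{Ann}_S(F)$ is a free extension with base $A=\mathsf{k}[t]/(t^n)$ and fiber $B=R/\operatorname{Ann}_R(F_B)$ (via $\iota,\pi$) if and only if for every $g_{n-1}\in\operatorname{Ann}_R(F_B)$ there exist $g_0,\dots,g_{n-2}\in R$ such that $t^{n-1}g_0+t^{n-2}g_1+\cdots+tg_{n-2}+g_{n-1}\in\operatorname{Ann}_S(F)$.
   Context: $\mathsf{k}$ a field, $n\ge2$, $R=\mathsf{k}[x_1,\dots,x_r]$ standard graded, $S=R[t]$; $Q_R=\mathsf{k}_{DP}[X_1,\dots,X_r]$, $Q_S=\mathsf{k}_{DP}[X_1,\dots,X_r,T]$ divided power rings with the contraction action ($x_i^s\circ X_i^{[k]}=X_i^{[k-s]}$ for $k\ge s$, else $0$; likewise $t$ on $T$). $F_B\in Q_R$ homogeneous of degree $j_B$, $G_0=F_B$, $G_i\in Q_R$ homogeneous of degree $j_B+i$ ($1\le i\le n-1$), $F=\sum_{i=0}^{n-1}T^{[n-1-i]}G_i$. $\iota:A\to C$ is induced by $\mathsf{k}[t]\subset S$ and $\pi:C\to B$ by $t\mapsto0$, $x_i\mapsto x_i$. $C$ is a free extension with base $A$ and fiber $B$ if $\iota$ makes $C$ a free $A$-module and $\pi$ is surjective with $\ker\pi=(\iota(A_+))C$. *)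

theory Defs
  imports "HOL-Library.Poly_Mapping" "HOL-Computational_Algebra.Polynomial"
begin

text \<open>R = k[x_v : v in 'v] is represented as finitely supported maps from monomials to k: the coefficient of the
monomial with exponent vector a.  The divided power ring Q_R uses the same type, the
coefficient at b being the coefficient of X^[b].  S = R[t] is ('k mpoly) poly, and
Q_S = Q_R[T] (divided powers in T) is also ('k mpoly) poly, the k-th coefficient being
the coefficient of T^[k].\<close>

type_synonym ('v, 'k) mpoly = "('v \<Rightarrow>\<^sub>0 nat) \<Rightarrow>\<^sub>0 'k"

definition mdeg :: "('v \<Rightarrow>\<^sub>0 nat) \<Rightarrow> nat" where
  "mdeg a = (\<Sum>v\<in>Poly_Mapping.keys a. Poly_Mapping.lookup a v)"

definition homogeneous :: "nat \<Rightarrow> ('v, 'k::zero) mpoly \<Rightarrow> bool" where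
  "homogeneous d G \<longleftrightarrow> (\<forall>b\<in>Poly_Mapping.keys G. mdeg b = d)"

definition contrR :: "('v, 'k::comm_ring_1) mpoly \<Rightarrow> ('v, 'k) mpoly \<Rightarrow> ('v, 'k) mpoly" where
  "contrR f G = (\<Sum>a\<in>Poly_Mapping.keys f. \<Sum>b\<in>Poly_Mapping.keys G.
      (if Poly_Mapping.lookup a \<le> Poly_Mapping.lookup b then Poly_Mapping.single (b - a) (Poly_Mapping.lookup f a * Poly_Mapping.lookup G b) else 0))"

definition contrS :: "('v, 'k::comm_ring_1) mpoly poly \<Rightarrow> ('v, 'k) mpoly poly \<Rightarrow> ('v, 'k) mpoly poly" where
  "contrS h F = (\<Sum>j\<le>degree h. \<Sum>k\<le>degree F.
      (if j \<le> k then monom (contrR (coeff h j) (coeff F k)) (k - j) else 0))"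

definition AnnR :: "('v, 'k::comm_ring_1) mpoly \<Rightarrow> ('v, 'k) mpoly set" where
  "AnnR G = {f. contrR f G = 0}"

definition AnnS :: "('v, 'k::comm_ring_1) mpoly poly \<Rightarrow> ('v, 'k) mpoly poly set" where
  "AnnS F = {h. contrS h F = 0}"

definition constR :: "'k::zero \<Rightarrow> ('v, 'k) mpoly" where
  "constR c = Poly_Mapping.single 0 c"

definition embT :: "'k::comm_ring_1 poly \<Rightarrow> ('v, 'k) mpoly poly" where
  "embT p = map_poly constR p"

text \<open>Free extension, stated on representatives.  C = S/Ann_S(F) (h, h' in S represent the
same element of C iff h - h' \<in> Ann_S(F)); A = k[t]/(t^n) (a in k[t] represents zero in A iff
t^n divides a); \<iota>([a]) = [embT a]; B = R/Ann_R(F_B), \<pi>([h]) = [h(x,0)] = [coeff h 0].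
 (1) C is a free A-module via \<iota>: there is a family of elements (represented by a set Bs of
     representatives in S) such that every element of C is a finite A-linear combination
     of them, and any A-linear combination equal to 0 in C has all coefficients 0 in A.
 (2) \<pi> is surjective.
 (3) ker \<pi> = \<iota>(A_+) C, where A_+ consists of the classes of a with zero constant term and
     \<iota>(A_+)C is the ideal of finite sums \<Sum> \<iota>(a_i) c_i.\<close>
definition free_extension :: "nat \<Rightarrow> ('v, 'k::field) mpoly poly \<Rightarrow> ('v, 'k) mpoly \<Rightarrow> bool" where
  "free_extension n F FB \<longleftrightarrow>
     (\<exists>Bs :: ('v, 'k) mpoly poly set.
        (\<forall>h. \<exists>a :: ('v, 'k) mpoly poly \<Rightarrow> 'k poly.
            finite {b\<in>Bs. a b \<noteq> 0} \<and>
            h - (\<Sum>b\<in>{b\<in>Bs. a b \<noteq> 0}. embT (a b) * b) \<in> AnnS F) \<and>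
        (\<forall>a :: ('v, 'k) mpoly poly \<Rightarrow> 'k poly.
            finite {b\<in>Bs. a b \<noteq> 0} \<and>
            (\<Sum>b\<in>{b\<in>Bs. a b \<noteq> 0}. embT (a b) * b) \<in> AnnS F
            \<longrightarrow> (\<forall>b\<in>Bs. [:0, 1:] ^ n dvd a b))) \<and>
     (\<forall>g. \<exists>h. coeff h 0 - g \<in> AnnR FB) \<and>
     (\<forall>h. coeff h 0 \<in> AnnR FB \<longleftrightarrow>
        (\<exists>(m::nat) (a :: nat \<Rightarrow> 'k poly) (c :: nat \<Rightarrow> ('v, 'k) mpoly poly).
            (\<forall>i<m. coeff (a i) 0 = 0) \<and>
            h - (\<Sum>i<m. embT (a i) * c i) \<in> AnnS F))"

end

theory Submission
  imports Defs
begin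
lemma lookup_constR_mult: "Poly_Mapping.lookup (constR c * f) a = c * Poly_Mapping.lookup f a"
  unfolding constR_def mult_map_scale_conv_mult[symmetric]
  by (simp add: map.rep_eq when_def)

lemma contrR_lookup_keys:
  "Poly_Mapping.lookup (contrR f G) m =
     (\<Sum>a\<in>Poly_Mapping.keys f. Poly_Mapping.lookup f a * Poly_Mapping.lookup G (m + a))"
proof -
  have inner: "(\<Sum>b\<in>Poly_Mapping.keys G. Poly_Mapping.lookup
      (if Poly_Mapping.lookup a \<le> Poly_Mapping.lookup b
       then Poly_Mapping.single (b - a) (Poly_Mapping.lookup f a * Poly_Mapping.lookup G b) else 0) m)
     = Poly_Mapping.lookup f a * Poly_Mapping.lookup G (m + a)" for a
  proof -
    have eq: "(Poly_Mapping.lookup a \<le> Poly_Mapping.lookup b \<and> b - a = m) \<longleftrightarrow> b = m + a" for b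
    proof
      assume h: "Poly_Mapping.lookup a \<le> Poly_Mapping.lookup b \<and> b - a = m"
      show "b = m + a"
      proof (rule poly_mapping_eqI)
        fix v
        have "Poly_Mapping.lookup a v \<le> Poly_Mapping.lookup b v" using h by (simp add: le_fun_def)
        then show "Poly_Mapping.lookup b v = Poly_Mapping.lookup (m + a) v"
          using h by (auto simp: lookup_add lookup_minus[where f=b])
      qed
    next
      assume "b = m + a"
      then show "Poly_Mapping.lookup a \<le> Poly_Mapping.lookup b \<and> b - a = m"
        by (auto simp: le_fun_def lookup_add intro!: poly_mapping_eqI simp: lookup_minus)
    qed
    have "(\<Sum>b\<in>Poly_Mapping.keys G. Poly_Mapping.lookup
      (if Poly_Mapping.lookup a \<le> Poly_Mapping.lookup b
       then Poly_Mapping.single (b - a) (Poly_Mapping.lookup f a * Poly_Mapping.lookup G b) else 0) m)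
      = (\<Sum>b\<in>Poly_Mapping.keys G. if b = m + a then Poly_Mapping.lookup f a * Poly_Mapping.lookup G b else 0)"
      apply (rule sum.cong[OF refl])
      using eq by (auto simp: lookup_single when_def)
    also have "\<dots> = Poly_Mapping.lookup f a * Poly_Mapping.lookup G (m + a)"
      by (simp add: sum.delta' in_keys_iff)
    finally show ?thesis .
  qed
  show ?thesis
    unfolding contrR_def lookup_sum using inner by simp
qed

lemma contrR_lookup:
  assumes "finite A" "Poly_Mapping.keys f \<subseteq> A"
  shows "Poly_Mapping.lookup (contrR f G) m =
     (\<Sum>a\<in>A. Poly_Mapping.lookup f a * Poly_Mapping.lookup G (m + a))"
  unfolding contrR_lookup_keys
  by (rule sum.mono_neutral_left) (use assms in \<open>auto simp: in_keys_iff\<close>)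

lemma contrR_add: "contrR (f + g) G = contrR f G + contrR g G"
proof (rule poly_mapping_eqI)
  fix m
  let ?A = "Poly_Mapping.keys f \<union> Poly_Mapping.keys g"
  have k: "Poly_Mapping.keys (f + g) \<subseteq> ?A" by (rule keys_add)
  show "Poly_Mapping.lookup (contrR (f + g) G) m = Poly_Mapping.lookup (contrR f G + contrR g G) m"
    unfolding lookup_add
    by (subst (1 2 3) contrR_lookup[where A="?A"]) (auto simp: k lookup_add algebra_simps sum.distrib)
qed

lemma contrR_zero [simp]: "contrR 0 G = 0"
  by (simp add: contrR_def)

lemma contrR_zero_right [simp]: "contrR f 0 = 0"
  by (simp add: contrR_def)

lemma contrR_uminus: "contrR (- f) G = - contrR f G"
  using contrR_add[of f "-f" G] by (simp add: add_eq_0_iff2)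

lemma contrR_diff: "contrR (f - g) G = contrR f G - contrR g G"
  using contrR_add[of f "-g" G] contrR_uminus[of g G] by simp

lemma contrR_scale: "contrR (constR c * f) G = constR c * contrR f G"
proof (rule poly_mapping_eqI)
  fix m
  have k: "Poly_Mapping.keys (constR c * f) \<subseteq> Poly_Mapping.keys f"
    by (auto simp: in_keys_iff lookup_constR_mult)
  show "Poly_Mapping.lookup (contrR (constR c * f) G) m = Poly_Mapping.lookup (constR c * contrR f G) m"
    unfolding lookup_constR_mult
    by (subst (1 2) contrR_lookup[where A="Poly_Mapping.keys f"])
       (use k in \<open>auto simp: lookup_constR_mult sum_distrib_left mult.assoc\<close>)
qed

lemma contrR_sum: "contrR (\<Sum>i\<in>I. f i) G = (\<Sum>i\<in>I. contrR (f i) G)"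
  by (induction I rule: infinite_finite_induct) (auto simp: contrR_add)

lemma coeff_contrS:
  assumes "\<And>k. n \<le> k \<Longrightarrow> coeff F k = 0"
  shows "coeff (contrS h F) l = (\<Sum>j<n. contrR (coeff h j) (coeff F (l + j)))"
proof -
  let ?g = "\<lambda>j. contrR (coeff h j) (coeff F (l + j))"
  have inner: "(\<Sum>k\<le>degree F. coeff (if j \<le> k then monom (contrR (coeff h j) (coeff F k)) (k - j) else 0) l)
      = ?g j" for j
  proof -
    have "(\<Sum>k\<le>degree F. coeff (if j \<le> k then monom (contrR (coeff h j) (coeff F k)) (k - j) else 0) l)
       = (\<Sum>k\<le>degree F. if k = l + j then contrR (coeff h j) (coeff F k) else 0)"
      by (rule sum.cong) (auto simp: coeff_monom)
    also have "\<dots> = ?g j"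
      by (auto simp: sum.delta' coeff_eq_0)
    finally show ?thesis .
  qed
  have "coeff (contrS h F) l = (\<Sum>j\<le>degree h. ?g j)"
    unfolding contrS_def coeff_sum using inner by simp
  also have "\<dots> = (\<Sum>j\<in>{..degree h} \<union> {..<n}. ?g j)"
    by (rule sum.mono_neutral_left) (auto simp: coeff_eq_0)
  also have "\<dots> = (\<Sum>j<n. ?g j)"
    by (rule sum.mono_neutral_right) (auto simp: assms)
  finally show ?thesis .
qed

lemma AnnS_iff:
  assumes "\<And>k. n \<le> k \<Longrightarrow> coeff F k = 0"
  shows "h \<in> AnnS F \<longleftrightarrow> (\<forall>l. (\<Sum>j<n. contrR (coeff h j) (coeff F (l + j))) = 0)"
  unfolding AnnS_def using coeff_contrS[OF assms] by (auto simp: poly_eq_iff)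

locale cs =
  fixes n :: nat and F :: "('v, 'k::comm_ring_1) mpoly poly" and FB :: "('v, 'k) mpoly"
  assumes hi: "\<And>k. n \<le> k \<Longrightarrow> coeff F k = 0"
    and n1: "1 \<le> n"
    and top: "coeff F (n - 1) = FB"
begin

lemma Ann_iff: "h \<in> AnnS F \<longleftrightarrow> (\<forall>l. (\<Sum>j<n. contrR (coeff h j) (coeff F (l + j))) = 0)"
  by (rule AnnS_iff) (rule hi)

lemma AnnS_zero: "0 \<in> AnnS F"
  by (simp add: AnnS_def contrS_def)

lemma AnnS_add: "h \<in> AnnS F \<Longrightarrow> h' \<in> AnnS F \<Longrightarrow> h + h' \<in> AnnS F"
  unfolding Ann_iff by (simp add: contrR_add sum.distrib)

lemma AnnS_diff: "h \<in> AnnS F \<Longrightarrow> h' \<in> AnnS F \<Longrightarrow> h - h' \<in> AnnS F"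
  unfolding Ann_iff by (simp add: contrR_diff sum_subtractf)

lemma AnnS_low: "(\<And>j. j < n \<Longrightarrow> coeff h j = 0) \<Longrightarrow> h \<in> AnnS F"
  unfolding Ann_iff by (simp del: coeff_eq_0)

lemma AnnS_pCons: assumes "h \<in> AnnS F" shows "pCons 0 h \<in> AnnS F"
  unfolding Ann_iff
proof
  fix l
  obtain n' where n': "n = Suc n'" using n1 by (cases n) auto
  have "(\<Sum>j<n. contrR (coeff (pCons 0 h) j) (coeff F (l + j)))
      = (\<Sum>j<n'. contrR (coeff h j) (coeff F (Suc l + j)))"
    unfolding n' sum.lessThan_Suc_shift by simp
  also have "\<dots> = (\<Sum>j<n. contrR (coeff h j) (coeff F (Suc l + j)))"
  proof -
    have "coeff F (Suc l + n') = 0" by (rule hi) (simp add: n')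
    then show ?thesis unfolding n' sum.lessThan_Suc by simp
  qed
  also have "\<dots> = 0" using assms unfolding Ann_iff by blast
  finally show "(\<Sum>j<n. contrR (coeff (pCons 0 h) j) (coeff F (l + j))) = 0" .
qed

lemma monom_Suc_mult: "monom (1::'a::comm_semiring_1) (Suc k) * h = pCons 0 (monom 1 k * h)"
  by (rule poly_eqI) (auto simp: coeff_monom_mult coeff_pCons split: nat.split)

lemma AnnS_monom: "h \<in> AnnS F \<Longrightarrow> monom 1 k * h \<in> AnnS F"
  by (induction k) (auto simp: monom_Suc_mult AnnS_pCons)

lemma AnnS_top:
  assumes "h \<in> AnnS F" "m < n" "\<And>j. j < m \<Longrightarrow> coeff h j = 0"
  shows "coeff h m \<in> AnnR FB"
proof -
  have "0 = (\<Sum>j<n. contrR (coeff h j) (coeff F (n - 1 - m + j)))"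
    using assms(1) unfolding Ann_iff by (metis (no_types))
  also have "\<dots> = (\<Sum>j\<in>{m}. contrR (coeff h j) (coeff F (n - 1 - m + j)))"
  proof (rule sum.mono_neutral_right)
    show "\<forall>j\<in>{..<n} - {m}. contrR (coeff h j) (coeff F (n - 1 - m + j)) = 0"
    proof
      fix j assume j: "j \<in> {..<n} - {m}"
      show "contrR (coeff h j) (coeff F (n - 1 - m + j)) = 0"
      proof (cases "j < m")
        case True then show ?thesis using assms(3) by simp
      next
        case False then have "n \<le> n - 1 - m + j" using j assms(2) by auto
        then show ?thesis by (simp add: hi)
      qed
    qed
  qed (use assms in auto)
  also have "\<dots> = contrR (coeff h m) FB" using assms(2) top by (simp del: One_nat_def)
  finally show ?thesis by (simp add: AnnR_def)
qed

lemma AnnS_coeff0: "h \<in> AnnS F \<Longrightarrow> coeff h 0 \<in> AnnR FB"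
  using AnnS_top[of h 0] n1 by auto

end

lemma AnnR_add: "f \<in> AnnR G \<Longrightarrow> g \<in> AnnR G \<Longrightarrow> f + g \<in> AnnR G"
  by (simp add: AnnR_def contrR_add)
lemma AnnR_diff: "f \<in> AnnR G \<Longrightarrow> g \<in> AnnR G \<Longrightarrow> f - g \<in> AnnR G"
  by (simp add: AnnR_def contrR_diff)

lemma sc_vs: "vector_space (\<lambda>c (f::('v, 'k::field) mpoly). constR c * f)"
proof (unfold_locales)
  fix a b :: 'k and x y :: "('v, 'k) mpoly"
  show "constR a * (x + y) = constR a * x + constR a * y" by (rule distrib_left)
  show "constR (a + b) * x = constR a * x + constR b * x"
    by (rule poly_mapping_eqI) (simp add: lookup_constR_mult lookup_add distrib_right)
  show "constR a * (constR b * x) = constR (a * b) * x"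
    by (rule poly_mapping_eqI) (simp add: lookup_constR_mult mult.assoc)
  show "constR 1 * x = x" by (simp add: constR_def)
qed

lemma exists_basis:
  fixes FB :: "('v, 'k::field) mpoly"
  obtains Bas where
    "\<And>T u. finite T \<Longrightarrow> T \<subseteq> Bas \<Longrightarrow> (\<Sum>r\<in>T. constR (u r) * r) \<in> AnnR FB \<Longrightarrow> \<forall>r\<in>T. u r = 0"
    "\<And>g. \<exists>T u. finite T \<and> T \<subseteq> Bas \<and> g - (\<Sum>r\<in>T. constR (u r) * r) \<in> AnnR FB"
proof -
  interpret vs: vector_space "\<lambda>c (f::('v, 'k::field) mpoly). constR c * f" by (rule sc_vs)
  define \<phi> where "\<phi> g = contrR g FB" for g :: "('v, 'k) mpoly"
  have phi_sum: "\<phi> (\<Sum>r\<in>T. constR (u r) * r) = (\<Sum>r\<in>T. constR (u r) * \<phi> r)" for T u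
    unfolding \<phi>_def contrR_sum contrR_scale ..
  obtain B where B: "B \<subseteq> range \<phi>" "vs.independent B" "range \<phi> \<subseteq> vs.span B"
    using vs.maximal_independent_subset by blast
  define \<psi> where "\<psi> v = (SOME g. \<phi> g = v)" for v
  have phipsi: "v \<in> B \<Longrightarrow> \<phi> (\<psi> v) = v" for v
    unfolding \<psi>_def using B(1) by (auto intro: someI)
  have injpsi: "inj_on \<psi> B" by (rule inj_onI) (metis phipsi)
  show ?thesis
  proof (rule that[of "\<psi> ` B"])
    fix T u assume T: "finite T" "T \<subseteq> \<psi> ` B" and S: "(\<Sum>r\<in>T. constR (u r) * r) \<in> AnnR FB"
    have psiphi: "r \<in> T \<Longrightarrow> \<psi> (\<phi> r) = r" for r using T(2) phipsi by auto
    have injphi: "inj_on \<phi> T" by (rule inj_onI) (metis psiphi)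
    have sub: "\<phi> ` T \<subseteq> B" using T(2) phipsi by auto
    have "\<phi> (\<Sum>r\<in>T. constR (u r) * r) = 0" using S by (simp add: AnnR_def \<phi>_def)
    then have "0 = (\<Sum>r\<in>T. constR (u r) * \<phi> r)" by (simp add: phi_sum)
    also have "\<dots> = (\<Sum>r\<in>T. constR (u (\<psi> (\<phi> r))) * \<phi> r)"
      by (rule sum.cong) (simp_all add: psiphi)
    also have "\<dots> = (\<Sum>v\<in>\<phi> ` T. constR (u (\<psi> v)) * v)"
      by (subst sum.reindex[OF injphi]) (simp add: comp_def)
    finally have z: "(\<Sum>v\<in>\<phi> ` T. constR (u (\<psi> v)) * v) = 0" by simp
    have H: "\<And>S w. S \<subseteq> B \<Longrightarrow> finite S \<Longrightarrow> (\<Sum>v\<in>S. constR (w v) * v) = 0 \<Longrightarrow> \<forall>v\<in>S. w v = 0"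
      using B(2) unfolding vs.independent_explicit_finite_subsets by blast
    have fin: "finite (\<phi> ` T)" using T(1) by simp
    have all0: "\<forall>v\<in>\<phi> ` T. u (\<psi> v) = 0"
      by (rule H[OF sub fin z])
    show "\<forall>r\<in>T. u r = 0"
    proof
      fix r assume r: "r \<in> T"
      have "u (\<psi> (\<phi> r)) = 0" using all0 r by blast
      then show "u r = 0" using psiphi[OF r] by simp
    qed
  next
    fix g
    have "\<phi> g \<in> vs.span B" using B(3) by (rule subsetD) (rule rangeI)
    then obtain t r where t: "finite t" "t \<subseteq> B" "\<phi> g = (\<Sum>a\<in>t. constR (r a) * a)"
      unfolding vs.span_explicit by blast
    have injt: "inj_on \<psi> t" by (rule inj_on_subset[OF injpsi t(2)])
    have "\<phi> (\<Sum>x\<in>\<psi> ` t. constR (r (\<phi> x)) * x) = (\<Sum>x\<in>\<psi> ` t. constR (r (\<phi> x)) * \<phi> x)"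
      by (rule phi_sum)
    also have "\<dots> = (\<Sum>a\<in>t. constR (r a) * a)"
    proof -
      have "(\<Sum>x\<in>\<psi> ` t. constR (r (\<phi> x)) * \<phi> x) = (\<Sum>a\<in>t. constR (r (\<phi> (\<psi> a))) * \<phi> (\<psi> a))"
        by (subst sum.reindex[OF injt]) (simp add: comp_def)
      also have "\<dots> = (\<Sum>a\<in>t. constR (r a) * a)"
        by (rule sum.cong) (use t(2) phipsi in auto)
      finally show ?thesis .
    qed
    finally have gm: "g - (\<Sum>x\<in>\<psi> ` t. constR (r (\<phi> x)) * x) \<in> AnnR FB"
      using t(3) unfolding AnnR_def \<phi>_def mem_Collect_eq contrR_diff by simp
    show "\<exists>T u. finite T \<and> T \<subseteq> \<psi> ` B \<and> g - (\<Sum>r\<in>T. constR (u r) * r) \<in> AnnR FB"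
      apply (intro exI[of _ "\<psi> ` t"] exI[of _ "\<lambda>x. r (\<phi> x)"])
      using t(1,2) gm by blast
  qed
qed

lemma constR_zero [simp]: "constR 0 = 0" by (simp add: constR_def)
lemma constR_add: "constR (a + b) = constR a + constR b" by (simp add: constR_def single_add)

lemma coeff_embT: "coeff (embT p) j = constR (coeff p j)"
  by (simp add: embT_def coeff_map_poly)

lemma coeff_comb:
  "coeff (\<Sum>r\<in>T. embT (a r) * [:r:]) j = (\<Sum>r\<in>T. constR (coeff (a r) j) * r)"
  by (simp add: coeff_sum coeff_embT mult.commute)

lemma coeff0_comb:
  "(\<forall>i<m. coeff (a i) 0 = 0) \<Longrightarrow> coeff (\<Sum>i<m. embT (a i) * c i) 0 = 0"
  by (simp add: coeff_sum coeff_mult_0 coeff_embT)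

lemma pCons0_ex: "coeff x 0 = 0 \<Longrightarrow> \<exists>q. x = pCons 0 q"
  by (cases x) auto

lemma tpow_dvd: "(\<And>j. j < n \<Longrightarrow> coeff p j = 0) \<Longrightarrow> [:0, 1:] ^ n dvd p"
proof (induction n arbitrary: p)
  case 0 then show ?case by simp
next
  case (Suc n)
  obtain q where q: "p = pCons 0 q" using pCons0_ex[of p] Suc.prems by auto
  have "[:0, 1:] ^ n dvd q"
    using Suc.prems[of "Suc _"] by (intro Suc.IH) (auto simp: q)
  then have "[:0, 1:] * [:0, 1:] ^ n dvd [:0, 1:] * q" by (rule mult_dvd_mono[OF dvd_refl])
  moreover have "[:0, 1:] * q = p" by (simp add: q)
  ultimately show ?case by simp
qed

lemma coeff_monomsum:
  "coeff (\<Sum>i<n - 1. monom (gs i) (n - 1 - i)) j = (if 1 \<le> j \<and> j < n then gs (n - 1 - j) else 0)"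
proof (cases "1 \<le> j \<and> j < n")
  case True
  have "coeff (\<Sum>i<n - 1. monom (gs i) (n - 1 - i)) j = (\<Sum>i<n - 1. if i = n - 1 - j then gs i else 0)"
    unfolding coeff_sum by (rule sum.cong) (use True in \<open>auto simp: coeff_monom\<close>)
  also have "\<dots> = gs (n - 1 - j)"
  proof -
    have "n - 1 - j \<in> {..<n - 1}" using True by auto
    then show ?thesis by (simp only: sum.delta finite_lessThan if_True)
  qed
  finally show ?thesis using True by simp
next
  case False
  have "coeff (\<Sum>i<n - 1. monom (gs i) (n - 1 - i)) j = (\<Sum>i<n - 1. 0)"
    unfolding coeff_sum by (rule sum.cong) (use False in \<open>auto simp: coeff_monom\<close>)
  then show ?thesis using False by (simp only: sum.neutral_const if_False)
qed

context cs
begin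

lemma Pshift:
  assumes P: "\<forall>g\<in>AnnR FB. \<exists>gs. (\<Sum>i<n - 1. monom (gs i) (n - 1 - i)) + [:g:] \<in> AnnS F"
    and g: "g \<in> AnnR FB"
  shows "\<exists>q. [:g:] + pCons 0 q \<in> AnnS F"
proof -
  obtain gs where gs: "(\<Sum>i<n - 1. monom (gs i) (n - 1 - i)) + [:g:] \<in> AnnS F" using P g by blast
  obtain q where "(\<Sum>i<n - 1. monom (gs i) (n - 1 - i)) = pCons 0 q"
    using pCons0_ex coeff_monomsum[where n=n and gs=gs and j=0] by auto
  then show ?thesis using gs by (metis add.commute)
qed

lemma decomp:
  assumes P: "\<forall>g\<in>AnnR FB. \<exists>gs. (\<Sum>i<n - 1. monom (gs i) (n - 1 - i)) + [:g:] \<in> AnnS F"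
    and SP: "\<And>g. \<exists>T u. finite T \<and> T \<subseteq> Bas \<and> g - (\<Sum>r\<in>T. constR (u r) * r) \<in> AnnR FB"
  shows "\<exists>T u q. finite T \<and> T \<subseteq> Bas \<and> h - [:\<Sum>r\<in>T. constR (u r) * r:] - pCons 0 q \<in> AnnS F"
proof -
  obtain T u where T: "finite T" "T \<subseteq> Bas" and w: "coeff h 0 - (\<Sum>r\<in>T. constR (u r) * r) \<in> AnnR FB"
    using SP by blast
  define w where "w = (\<Sum>r\<in>T. constR (u r) * r)"
  obtain q1 where q1: "[:coeff h 0 - w:] + pCons 0 q1 \<in> AnnS F"
    using Pshift[OF P] w unfolding w_def by blast
  obtain q2 where q2: "h - [:w:] - [:coeff h 0 - w:] = pCons 0 q2"
    using pCons0_ex[of "h - [:w:] - [:coeff h 0 - w:]"] by auto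
  have e1: "h - [:w:] = pCons 0 q2 + [:coeff h 0 - w:]" using q2 by (simp only: diff_eq_eq)
  have e2: "pCons 0 (q2 - q1) = pCons 0 q2 - pCons 0 q1" by simp
  have ab: "\<And>a b d :: ('v, 'k) mpoly poly. a + b - (a - d) = b + d" by (simp add: algebra_simps)
  have eq: "h - [:w:] - pCons 0 (q2 - q1) = [:coeff h 0 - w:] + pCons 0 q1"
    unfolding e1 e2 by (rule ab)
  show ?thesis
    apply (intro exI[of _ T] exI[of _ u] exI[of _ "q2 - q1"])
    using T q1 eq unfolding w_def by simp
qed

end

lemma constR_mult_zero: "constR 0 * r = 0" by simp

lemma monom_const: "monom 1 k * [:w::'a::comm_ring_1:] = monom w k"
  by (rule poly_eqI) (auto simp: coeff_monom_mult coeff_monom)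

lemma monom_Suc_pCons: "monom 1 (Suc k) * q = monom 1 k * pCons 0 q"
  by (rule poly_eqI) (auto simp: coeff_monom_mult coeff_pCons split: nat.split)

context cs
begin

lemma span_k:
  assumes P: "\<forall>g\<in>AnnR FB. \<exists>gs. (\<Sum>i<n - 1. monom (gs i) (n - 1 - i)) + [:g:] \<in> AnnS F"
    and SP: "\<And>g. \<exists>T u. finite T \<and> T \<subseteq> Bas \<and> g - (\<Sum>r\<in>T. constR (u r) * r) \<in> AnnR FB"
  shows "\<exists>T u h''. finite T \<and> T \<subseteq> Bas \<and> (\<forall>j r. r \<notin> T \<longrightarrow> u j r = 0) \<and>
     h - (\<Sum>j<k. monom (\<Sum>r\<in>T. constR (u j r) * r) j) - monom 1 k * h'' \<in> AnnS F"
proof (induction k)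
  case 0
  show ?case
    apply (intro exI[of _ "{}"] exI[of _ "\<lambda>_ _. 0"] exI[of _ h])
    by (simp add: AnnS_zero)
next
  case (Suc k)
  then obtain T u h'' where T: "finite T" "T \<subseteq> Bas" "\<forall>j r. r \<notin> T \<longrightarrow> u j r = 0"
    and H: "h - (\<Sum>j<k. monom (\<Sum>r\<in>T. constR (u j r) * r) j) - monom 1 k * h'' \<in> AnnS F"
    by blast
  obtain T2 u2 q where T2: "finite T2" "T2 \<subseteq> Bas"
    and H2: "h'' - [:\<Sum>r\<in>T2. constR (u2 r) * r:] - pCons 0 q \<in> AnnS F"
    using decomp[OF P SP, of h''] by blast
  define w where "w = (\<Sum>r\<in>T2. constR (u2 r) * r)"
  define u' where "u' j r = (if j = k then (if r \<in> T2 then u2 r else 0) else u j r)" for j r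
  have fin: "finite (T \<union> T2)" using T T2 by simp
  have s1: "(\<Sum>r\<in>T \<union> T2. constR (u' j r) * r) = (\<Sum>r\<in>T. constR (u j r) * r)" if "j < k" for j
  proof -
    have "(\<Sum>r\<in>T \<union> T2. constR (u' j r) * r) = (\<Sum>r\<in>T \<union> T2. constR (u j r) * r)"
      using that unfolding u'_def by simp
    also have "\<dots> = (\<Sum>r\<in>T. constR (u j r) * r)"
      by (rule sum.mono_neutral_right) (use fin T(3) in auto)
    finally show ?thesis .
  qed
  have s2: "(\<Sum>r\<in>T \<union> T2. constR (u' k r) * r) = w"
    unfolding w_def u'_def
    by (rule sum.mono_neutral_cong_right) (use fin in auto)
  have S: "(\<Sum>j<Suc k. monom (\<Sum>r\<in>T \<union> T2. constR (u' j r) * r) j)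
      = (\<Sum>j<k. monom (\<Sum>r\<in>T. constR (u j r) * r) j) + monom w k"
    by (simp add: s1 s2)
  have ab: "\<And>a b c d e f :: ('v, 'k) mpoly poly. a - (b + c) - e = (a - b - d) + (d - f - e) + (f - c)"
    by (simp add: algebra_simps)
  have eqX: "h - (\<Sum>j<Suc k. monom (\<Sum>r\<in>T \<union> T2. constR (u' j r) * r) j) - monom 1 (Suc k) * q
      = (h - (\<Sum>j<k. monom (\<Sum>r\<in>T. constR (u j r) * r) j) - monom 1 k * h'')
        + monom 1 k * (h'' - [:w:] - pCons 0 q)"
  proof -
    have "monom 1 k * (h'' - [:w:] - pCons 0 q) = monom 1 k * h'' - monom 1 k * [:w:] - monom 1 k * pCons 0 q"
      by (simp add: right_diff_distrib)
    then show ?thesis unfolding S monom_Suc_pCons monom_const by (simp add: algebra_simps)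
  qed
  have Y: "(h - (\<Sum>j<k. monom (\<Sum>r\<in>T. constR (u j r) * r) j) - monom 1 k * h'')
        + monom 1 k * (h'' - [:w:] - pCons 0 q) \<in> AnnS F"
    by (rule AnnS_add[OF H AnnS_monom]) (use H2 w_def in simp)
  have "h - (\<Sum>j<Suc k. monom (\<Sum>r\<in>T \<union> T2. constR (u' j r) * r) j) - monom 1 (Suc k) * q \<in> AnnS F"
    unfolding eqX by (rule Y)
  moreover have "\<forall>j r. r \<notin> T \<union> T2 \<longrightarrow> u' j r = 0" using T(3) unfolding u'_def by simp
  ultimately show ?case using fin T(2) T2(2)
    by (intro exI[of _ "T \<union> T2"] exI[of _ u'] exI[of _ q]) simp
qed

end

lemma embT_zero [simp]: "embT 0 = 0" by (simp add: embT_def)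

lemma coeff_monomsum2: "coeff (\<Sum>j<n. monom (c j) j) i = (if i < n then c i else 0)"
proof -
  have "coeff (\<Sum>j<n. monom (c j) j) i = (\<Sum>j<n. if j = i then c j else 0)"
    unfolding coeff_sum by (rule sum.cong) (auto simp: coeff_monom)
  then show ?thesis by (simp add: sum.delta')
qed

context cs
begin

lemma spanning:
  assumes P: "\<forall>g\<in>AnnR FB. \<exists>gs. (\<Sum>i<n - 1. monom (gs i) (n - 1 - i)) + [:g:] \<in> AnnS F"
    and SP: "\<And>g. \<exists>T u. finite T \<and> T \<subseteq> Bas \<and> g - (\<Sum>r\<in>T. constR (u r) * r) \<in> AnnR FB"
  shows "\<exists>a. finite {b\<in>(\<lambda>r. [:r:]) ` Bas. a b \<noteq> 0} \<and>
     h - (\<Sum>b\<in>{b\<in>(\<lambda>r. [:r:]) ` Bas. a b \<noteq> 0}. embT (a b) * b) \<in> AnnS F"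
proof -
  obtain T u h'' where T: "finite T" "T \<subseteq> Bas"
    and H: "h - (\<Sum>j<n. monom (\<Sum>r\<in>T. constR (u j r) * r) j) - monom 1 n * h'' \<in> AnnS F"
    using span_k[OF P SP, of h n] by blast
  define a where "a b = (if b \<in> (\<lambda>r. [:r:]) ` T then (\<Sum>j<n. monom (u j (coeff b 0)) j) else 0)" for b
  define Q where "Q = {b\<in>(\<lambda>r. [:r:]) ` Bas. a b \<noteq> 0}"
  have sub: "Q \<subseteq> (\<lambda>r. [:r:]) ` T" unfolding Q_def a_def by auto
  have finQ: "finite Q" using sub T(1) finite_subset by blast
  have inj: "inj_on (\<lambda>r. [:r:]) T" by (auto simp: inj_on_def)
  have "(\<Sum>b\<in>Q. embT (a b) * b) = (\<Sum>b\<in>(\<lambda>r. [:r:]) ` T. embT (a b) * b)"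
  proof (rule sum.mono_neutral_left)
    show "finite ((\<lambda>r. [:r:]) ` T)" using T(1) by simp
    show "Q \<subseteq> (\<lambda>r. [:r:]) ` T" by (rule sub)
    show "\<forall>b\<in>(\<lambda>r. [:r:]) ` T - Q. embT (a b) * b = 0"
      using T(2) unfolding Q_def by auto
  qed
  also have "\<dots> = (\<Sum>r\<in>T. embT (a [:r:]) * [:r:])"
    by (subst sum.reindex[OF inj]) (simp add: comp_def)
  also have "\<dots> = (\<Sum>r\<in>T. embT (\<Sum>j<n. monom (u j r) j) * [:r:])"
    by (rule sum.cong) (simp_all add: a_def)
  also have "\<dots> = (\<Sum>j<n. monom (\<Sum>r\<in>T. constR (u j r) * r) j)"
  proof (rule poly_eqI)
    fix i
    show "coeff (\<Sum>r\<in>T. embT (\<Sum>j<n. monom (u j r) j) * [:r:]) i =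
          coeff (\<Sum>j<n. monom (\<Sum>r\<in>T. constR (u j r) * r) j) i"
      unfolding coeff_comb coeff_monomsum2 by (cases "i < n") simp_all
  qed
  finally have eqS: "(\<Sum>b\<in>Q. embT (a b) * b) = (\<Sum>j<n. monom (\<Sum>r\<in>T. constR (u j r) * r) j)" .
  have low: "monom 1 n * h'' \<in> AnnS F"
    by (rule AnnS_low) (simp add: coeff_monom_mult)
  have "h - (\<Sum>b\<in>Q. embT (a b) * b)
      = (h - (\<Sum>j<n. monom (\<Sum>r\<in>T. constR (u j r) * r) j) - monom 1 n * h'') + monom 1 n * h''"
    unfolding eqS by simp
  also have "\<dots> \<in> AnnS F" by (rule AnnS_add[OF H low])
  finally show ?thesis using finQ unfolding Q_def by blast
qed

lemma independence:
  assumes IND: "\<And>T u. finite T \<Longrightarrow> T \<subseteq> Bas \<Longrightarrow> (\<Sum>r\<in>T. constR (u r) * r) \<in> AnnR FB \<Longrightarrow> \<forall>r\<in>T. u r = 0"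
    and fin: "finite {b\<in>(\<lambda>r. [:r:]) ` Bas. a b \<noteq> 0}"
    and sA: "(\<Sum>b\<in>{b\<in>(\<lambda>r. [:r:]) ` Bas. a b \<noteq> 0}. embT (a b) * b) \<in> AnnS F"
    and b0: "b0 \<in> (\<lambda>r. [:r:]) ` Bas"
  shows "[:0, 1:] ^ n dvd a b0"
proof (rule ccontr)
  assume nd: "\<not> [:0, 1:] ^ n dvd a b0"
  define TU where "TU = {r\<in>Bas. a [:r:] \<noteq> 0}"
  have img: "{b\<in>(\<lambda>r. [:r:]) ` Bas. a b \<noteq> 0} = (\<lambda>r. [:r:]) ` TU" by (auto simp: TU_def)
  have inj: "inj_on (\<lambda>r. [:r:]) TU" by (auto simp: inj_on_def)
  have finTU: "finite TU" using fin unfolding img using finite_imageD[OF _ inj] by blast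
  have TUsub: "TU \<subseteq> Bas" by (auto simp: TU_def)
  define s where "s = (\<Sum>r\<in>TU. embT (a [:r:]) * [:r:])"
  have sAnn: "s \<in> AnnS F" using sA unfolding img s_def by (simp add: sum.reindex[OF inj] comp_def)
  have cs: "coeff s i = (\<Sum>r\<in>TU. constR (coeff (a [:r:]) i) * r)" for i
    unfolding s_def by (rule coeff_comb)
  obtain r0 where r0: "r0 \<in> Bas" "b0 = [:r0:]" using b0 by blast
  obtain j0 where j0: "j0 < n" "coeff (a b0) j0 \<noteq> 0" using nd tpow_dvd by blast
  define M where "M = {j. j < n \<and> (\<exists>r\<in>TU. coeff (a [:r:]) j \<noteq> 0)}"
  have r0TU: "r0 \<in> TU" using r0 j0 unfolding TU_def by auto
  have j0M: "j0 \<in> M" unfolding M_def using j0 r0 r0TU by auto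
  have finM: "finite M" unfolding M_def by (rule finite_subset[of _ "{..<n}"]) auto
  define m where "m = Min M"
  have mM: "m \<in> M" unfolding m_def using finM j0M Min_in by blast
  have mle: "\<And>j. j \<in> M \<Longrightarrow> m \<le> j" unfolding m_def using finM Min_le by blast
  have mn: "m < n" using mM unfolding M_def by blast
  have low: "coeff s j = 0" if "j < m" for j
  proof -
    have "j \<notin> M" using mle that by force
    then have "\<forall>r\<in>TU. coeff (a [:r:]) j = 0" using that mn unfolding M_def by auto
    then show ?thesis unfolding cs by simp
  qed
  have "coeff s m \<in> AnnR FB" by (rule AnnS_top[OF sAnn mn low])
  then have "\<forall>r\<in>TU. coeff (a [:r:]) m = 0"
    unfolding cs by (rule IND[OF finTU TUsub, where u="\<lambda>r. coeff (a [:r:]) m"])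
  then show False using mM unfolding M_def by blast
qed

end

lemma embT_t: "embT [:0, 1:] = [:0, 1:]"
  by (rule poly_eqI) (simp add: coeff_embT coeff_pCons constR_def split: nat.split)

theorem lemma2p3:
  fixes n jB :: nat
    and FB :: "('v::finite, 'k::field) mpoly"
    and G :: "nat \<Rightarrow> ('v, 'k) mpoly"
    and F :: "('v, 'k) mpoly poly"
  assumes "n \<ge> 2"
    and "homogeneous jB FB"
    and "G 0 = FB"
    and "\<And>i. 1 \<le> i \<Longrightarrow> i \<le> n - 1 \<Longrightarrow> homogeneous (jB + i) (G i)"
    and "F = (\<Sum>i<n. monom (G i) (n - 1 - i))"
  shows "free_extension n F FB \<longleftrightarrow>
    (\<forall>g\<in>AnnR FB. \<exists>gs :: nat \<Rightarrow> ('v, 'k) mpoly.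
        (\<Sum>i<n - 1. monom (gs i) (n - 1 - i)) + [:g:] \<in> AnnS F)"
proof -
  have cF: "coeff F k = (\<Sum>i<n. if n - 1 - i = k then G i else 0)" for k
    unfolding assms(5) coeff_sum by (rule sum.cong) (auto simp: coeff_monom)
  have hi: "coeff F k = 0" if "n \<le> k" for k
  proof -
    have "(\<Sum>i<n. if n - 1 - i = k then G i else 0) = (\<Sum>i<n. 0)"
      by (rule sum.cong) (use that in auto)
    then show ?thesis unfolding cF by simp
  qed
  have top: "coeff F (n - 1) = FB"
  proof -
    have "(\<Sum>i<n. if n - 1 - i = n - 1 then G i else 0) = (\<Sum>i<n. if i = 0 then G i else 0)"
      by (rule sum.cong) (use assms(1) in auto)
    also have "\<dots> = G 0" using assms(1) by (simp add: sum.delta')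
    finally show ?thesis unfolding cF assms(3) .
  qed
  interpret cs n F FB
    by unfold_locales (use hi top assms(1) in auto)
  show ?thesis
  proof
    assume fe: "free_extension n F FB"
    have C3all: "\<forall>h. coeff h 0 \<in> AnnR FB \<longleftrightarrow> (\<exists>(m::nat) (a :: nat \<Rightarrow> 'k poly) (c :: nat \<Rightarrow> ('v, 'k) mpoly poly).
        (\<forall>i<m. coeff (a i) 0 = 0) \<and> h - (\<Sum>i<m. embT (a i) * c i) \<in> AnnS F)"
      using fe unfolding free_extension_def by (rule conjunct2[THEN conjunct2])
    have C3: "\<And>h. coeff h 0 \<in> AnnR FB \<Longrightarrow> (\<exists>(m::nat) a c. (\<forall>i<m. coeff (a i) 0 = 0) \<and>
        h - (\<Sum>i<m. embT (a i) * c i) \<in> AnnS F)"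
      using C3all by blast
    show "\<forall>g\<in>AnnR FB. \<exists>gs. (\<Sum>i<n - 1. monom (gs i) (n - 1 - i)) + [:g:] \<in> AnnS F"
    proof
      fix g assume g: "g \<in> AnnR FB"
      obtain m :: nat and a :: "nat \<Rightarrow> 'k poly" and c where ma: "\<forall>i<m. coeff (a i) 0 = 0"
        and mc: "[:g:] - (\<Sum>i<m. embT (a i) * c i) \<in> AnnS F"
        using C3[of "[:g:]"] g by auto
      define s where "s = (\<Sum>i<m. embT (a i) * c i)"
      have s0: "coeff s 0 = 0" unfolding s_def by (rule coeff0_comb[OF ma])
      define gs where "gs i = - coeff s (n - 1 - i)" for i
      define q where "q = (\<Sum>i<n - 1. monom (gs i) (n - 1 - i)) + [:g:]"
      have d: "q - ([:g:] - s) \<in> AnnS F"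
      proof (rule AnnS_low)
        fix j assume j: "j < n"
        have cm: "coeff (\<Sum>i<n - 1. monom (gs i) (n - 1 - i)) j = (if 1 \<le> j \<and> j < n then gs (n - 1 - j) else 0)"
          by (rule coeff_monomsum)
        show "coeff (q - ([:g:] - s)) j = 0"
        proof (cases "j = 0")
          case True then show ?thesis unfolding q_def coeff_diff coeff_add cm by (simp add: s0)
        next
          case False
          then have "n - 1 - (n - 1 - j) = j" using j by auto
          then show ?thesis using False j unfolding q_def coeff_diff coeff_add cm
            by (simp add: gs_def coeff_pCons split: nat.split)
        qed
      qed
      have "q = ([:g:] - s) + (q - ([:g:] - s))" by simp
      also have "\<dots> \<in> AnnS F" by (rule AnnS_add[OF _ d]) (use mc s_def in simp)
      finally show "\<exists>gs. (\<Sum>i<n - 1. monom (gs i) (n - 1 - i)) + [:g:] \<in> AnnS F"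
        unfolding q_def by blast
    qed
  next
    assume P: "\<forall>g\<in>AnnR FB. \<exists>gs. (\<Sum>i<n - 1. monom (gs i) (n - 1 - i)) + [:g:] \<in> AnnS F"
    obtain Bas :: "('v, 'k) mpoly set" where
      IND: "\<And>T u. finite T \<Longrightarrow> T \<subseteq> Bas \<Longrightarrow> (\<Sum>r\<in>T. constR (u r) * r) \<in> AnnR FB \<Longrightarrow> \<forall>r\<in>T. u r = 0"
      and SP: "\<And>g. \<exists>T u. finite T \<and> T \<subseteq> Bas \<and> g - (\<Sum>r\<in>T. constR (u r) * r) \<in> AnnR FB"
      using exists_basis[of FB] by blast
    have part1: "\<exists>Bs :: ('v, 'k) mpoly poly set.
        (\<forall>h. \<exists>a :: ('v, 'k) mpoly poly \<Rightarrow> 'k poly.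
            finite {b\<in>Bs. a b \<noteq> 0} \<and>
            h - (\<Sum>b\<in>{b\<in>Bs. a b \<noteq> 0}. embT (a b) * b) \<in> AnnS F) \<and>
        (\<forall>a :: ('v, 'k) mpoly poly \<Rightarrow> 'k poly.
            finite {b\<in>Bs. a b \<noteq> 0} \<and>
            (\<Sum>b\<in>{b\<in>Bs. a b \<noteq> 0}. embT (a b) * b) \<in> AnnS F
            \<longrightarrow> (\<forall>b\<in>Bs. [:0, 1:] ^ n dvd a b))"
    proof (intro exI[of _ "(\<lambda>r. [:r:]) ` Bas"] conjI allI impI ballI)
      fix h show "\<exists>a. finite {b\<in>(\<lambda>r. [:r:]) ` Bas. a b \<noteq> 0} \<and>
          h - (\<Sum>b\<in>{b\<in>(\<lambda>r. [:r:]) ` Bas. a b \<noteq> 0}. embT (a b) * b) \<in> AnnS F"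
        by (rule spanning[OF P SP])
    next
      fix a b
      assume "finite {b\<in>(\<lambda>r. [:r:]) ` Bas. a b \<noteq> 0} \<and>
          (\<Sum>b\<in>{b\<in>(\<lambda>r. [:r:]) ` Bas. a b \<noteq> 0}. embT (a b) * b) \<in> AnnS F"
        and "b \<in> (\<lambda>r. [:r:]) ` Bas"
      then show "[:0, 1:] ^ n dvd a b"
        using independence[OF IND] by blast
    qed
    have part2: "\<forall>g. \<exists>h. coeff h 0 - g \<in> AnnR FB"
    proof
      fix g show "\<exists>h. coeff h 0 - g \<in> AnnR FB"
        by (intro exI[of _ "[:g:]"]) (simp add: AnnR_def)
    qed
    have part3: "\<forall>h. coeff h 0 \<in> AnnR FB \<longleftrightarrow>
        (\<exists>(m::nat) (a :: nat \<Rightarrow> 'k poly) (c :: nat \<Rightarrow> ('v, 'k) mpoly poly).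
            (\<forall>i<m. coeff (a i) 0 = 0) \<and>
            h - (\<Sum>i<m. embT (a i) * c i) \<in> AnnS F)"
    proof (intro allI iffI)
      fix h assume h0: "coeff h 0 \<in> AnnR FB"
      obtain q where q: "[:coeff h 0:] + pCons 0 q \<in> AnnS F" using Pshift[OF P h0] by blast
      obtain q2 where q2: "h - ([:coeff h 0:] + pCons 0 q) = pCons 0 q2"
        using pCons0_ex[of "h - ([:coeff h 0:] + pCons 0 q)"] by auto
      have e: "(\<Sum>i<(1::nat). embT [:0, 1:] * q2) = pCons 0 q2" by (simp add: embT_t)
      have ab: "\<And>x y z :: ('v, 'k) mpoly poly. x - y = z \<Longrightarrow> x - z = y" by (simp add: algebra_simps)
      have "h - (\<Sum>i<(1::nat). embT [:0, 1:] * q2) = [:coeff h 0:] + pCons 0 q"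
        unfolding e by (rule ab[OF q2])
      then have X: "(\<forall>i<(1::nat). coeff ((\<lambda>_. [:0, 1::'k:]) i) 0 = 0) \<and>
          h - (\<Sum>i<(1::nat). embT ((\<lambda>_. [:0, 1:]) i) * (\<lambda>_. q2) i) \<in> AnnS F"
        using q by simp
      show "\<exists>(m::nat) (a :: nat \<Rightarrow> 'k poly) (c :: nat \<Rightarrow> ('v, 'k) mpoly poly).
            (\<forall>i<m. coeff (a i) 0 = 0) \<and> h - (\<Sum>i<m. embT (a i) * c i) \<in> AnnS F"
        by (rule exI[of _ 1], rule exI[of _ "\<lambda>_. [:0, 1:]"], rule exI[of _ "\<lambda>_. q2"], rule X)
    next
      fix h assume "\<exists>(m::nat) (a :: nat \<Rightarrow> 'k poly) (c :: nat \<Rightarrow> ('v, 'k) mpoly poly).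
            (\<forall>i<m. coeff (a i) 0 = 0) \<and> h - (\<Sum>i<m. embT (a i) * c i) \<in> AnnS F"
      then obtain m :: nat and a :: "nat \<Rightarrow> 'k poly" and c where ma: "\<forall>i<m. coeff (a i) 0 = 0"
        and mc: "h - (\<Sum>i<m. embT (a i) * c i) \<in> AnnS F" by blast
      have "coeff (h - (\<Sum>i<m. embT (a i) * c i)) 0 \<in> AnnR FB" by (rule AnnS_coeff0[OF mc])
      then show "coeff h 0 \<in> AnnR FB" using coeff0_comb[OF ma, of c] by simp
    qed
    show "free_extension n F FB"
      unfolding free_extension_def using part1 part2 part3 by blast
  qed
qed

end
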